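(* Suppose that the condition $V \succ 0,W \succ 0$ is relaxed to $V \succeq 0,W \succeq 0$. Assume that $f$ is a bijection for the given $V \succeq 0,W \succeq 0$. Consider any tuples $(\lambda ,S_k^\lambda ,F_k^\lambda ,P_k^\lambda )_{k = 0}^{N - 1}$ such that $\lambda>0$ and $C(\{ S_k^\lambda \} _{k = 0}^{N - 1} ) = \gamma$. Then, the corresponding $\{(S_k^\lambda,F_k^\lambda)\}_{k=0}^{N-1}$ is an optimal solution of the constrained LQG (covariance selection) problem.
   Context: Consider the stochastic LTI system $x(k+1)=Ax(k)+Bu(k)+w(k)$ with $x(k)\in\mathbb R^n$, $u(k)\in\mathbb R^m$, $x(0)\sim\mathcal N(z,V)$, $w(k)\sim\mathcal N(0,W)$ mutually independent, and linear feedback $u(k)=F_kx(k)$, $k\in\{0,\dots,N-1\}$. With $S_k=\mathbb E([x(k);u(k)][x(k);u(k)]^T)$, the constrained LQG (covariance selection) problem is: minimize $J_p(\{S_k\})=\mathrm{Tr}\big(Q_f([A\ B]S_{N-1}[A\ B]^T+W)\big)+\sum_{k=0}^{N-1}\mathrm{Tr}(\mathrm{diag}(Q_k,R_k)S_k)$ over $\{S_k,F_k\}$ subject to $S_k=\Phi(F_k,S_{k-1})$ ($k=1,\dots,N-1$), $S_0=[I_n;F_0](V+zz^T)[I_n;F_0]^T$, and $C(\{S_k\})\le\gamma$, where $C(\{S_k\})=\mathrm{Tr}\big(\tilde Q_f([A\ B]S_{N-1}[A\ B]^T+W)\big)+\sum_{k=0}^{N-1}\mathrm{Tr}(\mathrm{diag}(\tilde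 Q_k,\tilde R_k)S_k)$ and $\Phi(F,S)=[I_n;F]([A\ B]S[A\ B]^T+W)[I_n;F]^T$. Standing assumptions (other than the relaxed noise condition): $Q_f,\tilde Q_f,Q_k,\tilde Q_k\succeq0$, $R_k+\lambda\tilde R_k\succ0$ for all $k$, $\lambda>0$; strict feasibility of the inequality constraint; $C(\{S_k^0\})>\gamma$. For $\lambda\ge0$, $X_N^\lambda=Q_f+\lambda\tilde Q_f$, $X_k^\lambda=A^TX_{k+1}^\lambda A-A^TX_{k+1}^\lambda B(R_k+\lambda\tilde R_k+B^TX_{k+1}^\lambda B)^{-1}B^TX_{k+1}^\lambda A+Q_k+\lambda\tilde Q_k$, $F_k^\lambda=-(R_k+\lambda\tilde R_k+B^TX_{k+1}^\lambda B)^{-1}B^TX_{k+1}^\lambda A$, $S_0^\lambda=[I;F_0^\lambda](V+zz^T)[I;F_0^\lambda]^T$, $S_k^\lambda=\Phi(F_k^\lambda,S_{k-1}^\lambda)$, $P_k^\lambda=\begin{bmatrix}Q_k+\lambda\tilde Q_k+A^TX_{k+1}^\lambda A & A^TX_{k+1}^\lambda B\\ B^TX_{k+1}^\lambda A & R_k+\lambda\tilde R_k+B^TX_{k+1}^\lambda B\end{bmatrix}$, and $f(\lambda)=C(\{S_k^\lambda\}_{k=0}^{N-1})-\gamma$ (which depends on $V,W$). When $V\succ0,W\succ0$ it was shown that such tuples are exactly the KKT points and are optimal; with only $V\succeq0,W\succeq0$ these tuples still satisfy the KKT conditions but need not be the unique KKT points. *)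

theory Defs
  imports "HOL-Analysis.Analysis"
begin

text \<open>Matrices are rendered as Cartesian-product matrices: state index type 'n,
  input index type 'm, stacked (state;input) index type 'n + 'm.\<close>

definition psd :: "real^'k^'k \<Rightarrow> bool" where
  "psd M \<longleftrightarrow> transpose M = M \<and> (\<forall>x. 0 \<le> x \<bullet> (M *v x))"

definition pd :: "real^'k^'k \<Rightarrow> bool" where
  "pd M \<longleftrightarrow> transpose M = M \<and> (\<forall>x. x \<noteq> 0 \<longrightarrow> 0 < x \<bullet> (M *v x))"

definition AB :: "real^'n^'n \<Rightarrow> real^'m^'n \<Rightarrow> real^('n + 'm)^'n" where
  "AB A B = (\<chi> i j. case j of Inl a \<Rightarrow> A $ i $ a | Inr b \<Rightarrow> B $ i $ b)"

text \<open>The block column [I_n; F].\<close>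
definition IF :: "real^'n^'m \<Rightarrow> real^'n^('n + 'm)" where
  "IF F = (\<chi> i j. case i of Inl a \<Rightarrow> (if a = j then 1 else 0) | Inr b \<Rightarrow> F $ b $ j)"

definition bdiag :: "real^'n^'n \<Rightarrow> real^'m^'m \<Rightarrow> real^('n + 'm)^('n + 'm)" where
  "bdiag Q R = (\<chi> i j. case (i, j) of (Inl a, Inl b) \<Rightarrow> Q $ a $ b
                                   | (Inr a, Inr b) \<Rightarrow> R $ a $ b
                                   | _ \<Rightarrow> 0)"

definition Phi :: "real^'n^'n \<Rightarrow> real^'m^'n \<Rightarrow> real^'n^'n \<Rightarrow> real^'n^'m
                   \<Rightarrow> real^('n + 'm)^('n + 'm) \<Rightarrow> real^('n + 'm)^('n + 'm)" where
  "Phi A B W F S = IF F ** (AB A B ** S ** transpose (AB A B) + W) ** transpose (IF F)"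

definition outer :: "real^'n \<Rightarrow> real^'n^'n" where
  "outer z = (\<chi> i j. z $ i * z $ j)"

text \<open>Generic cost  Tr(Qf([A B] S_{N-1} [A B]^T + W)) + sum_{k<N} Tr(diag(Q_k,R_k) S_k);
  used both for J_p (with Q_f, Q_k, R_k) and for C (with the tilde weights).\<close>
definition cost :: "real^'n^'n \<Rightarrow> real^'m^'n \<Rightarrow> real^'n^'n \<Rightarrow> nat
     \<Rightarrow> real^'n^'n \<Rightarrow> (nat \<Rightarrow> real^'n^'n) \<Rightarrow> (nat \<Rightarrow> real^'m^'m)
     \<Rightarrow> (nat \<Rightarrow> real^('n + 'm)^('n + 'm)) \<Rightarrow> real" where
  "cost A B W N Qf Q R S =
     trace (Qf ** (AB A B ** S (N - 1) ** transpose (AB A B) + W))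
     + (\<Sum>k<N. trace (bdiag (Q k) (R k) ** S k))"

definition feasible where
  "feasible A B W V z N Qft Qt Rt \<gamma> S F \<longleftrightarrow>
     S 0 = IF (F 0) ** (V + outer z) ** transpose (IF (F 0)) \<and>
     (\<forall>k\<in>{1..N-1}. S k = Phi A B W (F k) (S (k - 1))) \<and>
     cost A B W N Qft Qt Rt S \<le> \<gamma>"

definition strictly_feasible where
  "strictly_feasible A B W V z N Qft Qt Rt \<gamma> \<longleftrightarrow>
     (\<exists>S F. S 0 = IF (F 0) ** (V + outer z) ** transpose (IF (F 0)) \<and>
     (\<forall>k\<in>{1..N-1}. S k = Phi A B W (F k) (S (k - 1))) \<and>
     cost A B W N Qft Qt Rt S < \<gamma>)"

definition optimal where
  "optimal A B W V z N Qf Q R Qft Qt Rt \<gamma> S F \<longleftrightarrow>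
     feasible A B W V z N Qft Qt Rt \<gamma> S F \<and>
     (\<forall>S' F'. feasible A B W V z N Qft Qt Rt \<gamma> S' F' \<longrightarrow>
        cost A B W N Qf Q R S \<le> cost A B W N Qf Q R S')"

text \<open>Riccati recursion, indexed by steps-to-go j = N - k:
  Xr 0 = X_N, Xr (Suc j) = X_{N - Suc j}.\<close>
fun Xr :: "real^'n^'n \<Rightarrow> real^'m^'n \<Rightarrow> nat \<Rightarrow> real^'n^'n \<Rightarrow> (nat \<Rightarrow> real^'n^'n)
     \<Rightarrow> (nat \<Rightarrow> real^'m^'m) \<Rightarrow> real^'n^'n \<Rightarrow> (nat \<Rightarrow> real^'n^'n)
     \<Rightarrow> (nat \<Rightarrow> real^'m^'m) \<Rightarrow> real \<Rightarrow> nat \<Rightarrow> real^'n^'n" where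
  "Xr A B N Qf Q R Qft Qt Rt lam 0 = Qf + lam *\<^sub>R Qft"
| "Xr A B N Qf Q R Qft Qt Rt lam (Suc j) =
     (let X = Xr A B N Qf Q R Qft Qt Rt lam j; k = N - Suc j in
      transpose A ** X ** A
      - transpose A ** X ** B ** matrix_inv (R k + lam *\<^sub>R Rt k + transpose B ** X ** B)
          ** transpose B ** X ** A
      + Q k + lam *\<^sub>R Qt k)"

definition Xl where
  "Xl A B N Qf Q R Qft Qt Rt lam k = Xr A B N Qf Q R Qft Qt Rt lam (N - k)"

definition Fl :: "real^'n^'n \<Rightarrow> real^'m^'n \<Rightarrow> nat \<Rightarrow> real^'n^'n \<Rightarrow> (nat \<Rightarrow> real^'n^'n)
     \<Rightarrow> (nat \<Rightarrow> real^'m^'m) \<Rightarrow> real^'n^'n \<Rightarrow> (nat \<Rightarrow> real^'n^'n)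
     \<Rightarrow> (nat \<Rightarrow> real^'m^'m) \<Rightarrow> real \<Rightarrow> nat \<Rightarrow> real^'n^'m" where
  "Fl A B N Qf Q R Qft Qt Rt lam k =
     (let X = Xl A B N Qf Q R Qft Qt Rt lam (Suc k) in
      - (matrix_inv (R k + lam *\<^sub>R Rt k + transpose B ** X ** B) ** transpose B ** X ** A))"

fun Sl where
  "Sl A B W V z N Qf Q R Qft Qt Rt lam 0 =
     IF (Fl A B N Qf Q R Qft Qt Rt lam 0) ** (V + outer z)
        ** transpose (IF (Fl A B N Qf Q R Qft Qt Rt lam 0))"
| "Sl A B W V z N Qf Q R Qft Qt Rt lam (Suc k) =
     Phi A B W (Fl A B N Qf Q R Qft Qt Rt lam (Suc k)) (Sl A B W V z N Qf Q R Qft Qt Rt lam k)"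

definition fl where
  "fl A B W V z N Qf Q R Qft Qt Rt \<gamma> lam =
     cost A B W N Qft Qt Rt (Sl A B W V z N Qf Q R Qft Qt Rt lam) - \<gamma>"

end

theory Submission
  imports Defs
begin

lemma mm_add_r: "((A::real^'n^'m) + B) ** C = A ** C + B ** C"
  by (simp add: matrix_matrix_mult_def vec_eq_iff sum.distrib algebra_simps)
lemma mm_add_l: "(A::real^'n^'m) ** (B + C) = A ** B + A ** C"
  by (rule matrix_add_ldistrib)
lemma mm_diff_r: "((A::real^'n^'m) - B) ** C = A ** C - B ** C"
  by (simp add: matrix_matrix_mult_def vec_eq_iff sum_subtractf algebra_simps)
lemma mm_diff_l: "(A::real^'n^'m) ** (B - C) = A ** B - A ** C"
  by (simp add: matrix_matrix_mult_def vec_eq_iff sum_subtractf algebra_simps)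
lemma mm_neg_r: "(- (A::real^'n^'m)) ** C = - (A ** C)"
  by (simp add: matrix_matrix_mult_def vec_eq_iff sum_negf)
lemma mm_neg_l: "(A::real^'n^'m) ** (- C) = - (A ** C)"
  by (simp add: matrix_matrix_mult_def vec_eq_iff sum_negf)
lemma mm_scale_r: "(k *\<^sub>R (A::real^'n^'m)) ** C = k *\<^sub>R (A ** C)"
  by (simp add: matrix_matrix_mult_def vec_eq_iff sum_distrib_left algebra_simps)
lemma mm_scale_l: "(A::real^'n^'m) ** (k *\<^sub>R C) = k *\<^sub>R (A ** C)"
  by (simp add: matrix_matrix_mult_def vec_eq_iff sum_distrib_left algebra_simps)
lemma mm_zero_r: "(A::real^'n^'m) ** (0::real^'k^'n) = 0"
  by (simp add: matrix_matrix_mult_def vec_eq_iff)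
lemma mm_zero_l: "(0::real^'n^'m) ** (A::real^'k^'n) = 0"
  by (simp add: matrix_matrix_mult_def vec_eq_iff)
lemma tr_add: "transpose ((A::real^'n^'m) + B) = transpose A + transpose B"
  by (simp add: transpose_def vec_eq_iff)
lemma tr_diff: "transpose ((A::real^'n^'m) - B) = transpose A - transpose B"
  by (simp add: transpose_def vec_eq_iff)
lemma tr_neg: "transpose (- (A::real^'n^'m)) = - transpose A"
  by (simp add: transpose_def vec_eq_iff)
lemma tr_zero: "transpose (0::real^'n^'m) = 0"
  by (simp add: transpose_def vec_eq_iff)
lemma trace_scale: "trace (k *\<^sub>R (A::real^'n^'n)) = k * trace A"
  by (simp add: trace_def sum_distrib_left)
lemma trace_zero: "trace (0::real^'n^'n) = 0"
  by (simp add: trace_def)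

lemmas mm_simps = mm_add_r mm_add_l mm_diff_r mm_diff_l mm_neg_r mm_neg_l mm_scale_r mm_scale_l
  mm_zero_r mm_zero_l tr_add tr_diff tr_neg tr_zero matrix_transpose_mul transpose_scalar

lemma sum_UNIV_plus: "sum (f :: 'a::finite + 'b::finite \<Rightarrow> real) UNIV = (\<Sum>a\<in>UNIV. f (Inl a)) + (\<Sum>b\<in>UNIV. f (Inr b))"
proof -
  have "sum f UNIV = sum f (UNIV <+> UNIV)" by simp
  also have "\<dots> = sum (f \<circ> Inl) UNIV + sum (f \<circ> Inr) UNIV" by (rule sum.Plus) auto
  finally show ?thesis by simp
qed

lemma AB_IF: "AB A B ** IF F = A + B ** F"
  by (simp add: matrix_matrix_mult_def vec_eq_iff AB_def IF_def sum_UNIV_plus if_distrib cong: if_cong)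

lemma bdiag_IF: "bdiag Q R ** IF F = (\<chi> k j. case k of Inl a \<Rightarrow> Q$a$j | Inr b \<Rightarrow> (R ** (F::real^'n^'m))$b$j)"
  by (simp add: matrix_matrix_mult_def vec_eq_iff bdiag_def IF_def sum_UNIV_plus if_distrib split: sum.split cong: if_cong)

lemma if_fun_app: "(if P then (f::real\<Rightarrow>real) else g) x = (if P then f x else g x)" by simp

lemma IF_bdiag_IF: "transpose (IF F) ** bdiag Q R ** IF F = Q + transpose F ** R ** (F::real^'n^'m)"
  unfolding matrix_mul_assoc[symmetric] bdiag_IF
  by (simp add: matrix_matrix_mult_def vec_eq_iff IF_def transpose_def sum_UNIV_plus if_distrib if_fun_app cong: if_cong)

section \<open>Positive semidefiniteness\<close>

lemma psd_sym: "psd M \<Longrightarrow> transpose M = M" by (simp add: psd_def)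
lemma psd_form: "psd M \<Longrightarrow> 0 \<le> x \<bullet> (M *v x)" by (simp add: psd_def)
lemma pd_psd: "pd M \<Longrightarrow> psd M"
  unfolding pd_def psd_def by (metis inner_zero_left order.refl less_imp_le)

lemma psd_add: "psd M \<Longrightarrow> psd P \<Longrightarrow> psd (M + P)"
  unfolding psd_def by (simp add: tr_add matrix_vector_mult_add_rdistrib inner_add_right)
lemma scale_mv: "(c *\<^sub>R (M::real^'k^'j)) *v x = c *\<^sub>R (M *v x)"
  by (simp add: matrix_vector_mult_def vec_eq_iff sum_distrib_left mult.assoc)
lemma psd_scale: "psd M \<Longrightarrow> 0 \<le> c \<Longrightarrow> psd (c *\<^sub>R M)"
  unfolding psd_def by (simp add: transpose_scalar scale_mv)
lemma pd_add_psd: "pd M \<Longrightarrow> psd P \<Longrightarrow> pd (M + P)"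
  unfolding psd_def pd_def
  by (simp add: tr_add matrix_vector_mult_add_rdistrib inner_add_right add_pos_nonneg)

lemma psd_congr:
  fixes M :: "real^'k^'k" and C :: "real^'j^'k"
  assumes "psd M" shows "psd (transpose C ** M ** C)"
  unfolding psd_def
proof
  show "transpose (transpose C ** M ** C) = transpose C ** M ** C"
    using psd_sym[OF assms] by (simp add: matrix_transpose_mul matrix_mul_assoc)
  show "\<forall>x. 0 \<le> x \<bullet> ((transpose C ** M ** C) *v x)"
  proof
    fix x :: "real^'j"
    have "x \<bullet> ((transpose C ** M ** C) *v x) = x \<bullet> (transpose C *v (M *v (C *v x)))"
      by (metis matrix_vector_mul_assoc matrix_mul_assoc)
    also have "\<dots> = (C *v x) \<bullet> (M *v (C *v x))"
      by (metis dot_lmul_matrix inner_commute transpose_matrix_vector)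
    finally show "0 \<le> x \<bullet> ((transpose C ** M ** C) *v x)" using psd_form[OF assms] by simp
  qed
qed

lemma psd_congr':
  fixes M :: "real^'k^'k" and C :: "real^'k^'j"
  assumes "psd M" shows "psd (C ** M ** transpose C)"
  using psd_congr[OF assms, of "transpose C"] by simp

lemma outer_form: "x \<bullet> (outer z *v x) = (z \<bullet> x)^2"
proof -
  have "x \<bullet> (outer z *v x) = (\<Sum>i\<in>UNIV. x$i * (\<Sum>j\<in>UNIV. z$i * z$j * x$j))"
    by (simp add: inner_vec_def outer_def matrix_vector_mult_def)
  also have "\<dots> = (\<Sum>i\<in>UNIV. z$i * x$i) * (\<Sum>j\<in>UNIV. z$j * x$j)"
    by (simp add: sum_distrib_left sum_distrib_right mult_ac)
  finally show ?thesis by (simp add: inner_vec_def power2_eq_square)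
qed

lemma psd_outer: "psd (outer z)"
  unfolding psd_def by (simp add: outer_form, simp add: outer_def transpose_def vec_eq_iff mult.commute)

lemma bdiag_form: "x \<bullet> (bdiag Q R *v x) =
   (\<chi> a. x $ Inl a) \<bullet> (Q *v (\<chi> a. x $ Inl a)) + (\<chi> b. x $ Inr b) \<bullet> (R *v (\<chi> b. x $ Inr b))"
  by (simp add: inner_vec_def bdiag_def matrix_vector_mult_def sum_UNIV_plus)

lemma psd_bdiag: "psd Q \<Longrightarrow> psd R \<Longrightarrow> psd (bdiag Q R)"
  unfolding psd_def
  apply (intro conjI allI)
   apply (simp add: bdiag_def transpose_def vec_eq_iff split: sum.split)
  apply (simp add: bdiag_form add_nonneg_nonneg)
  done

lemma pd_inv:
  fixes G :: "real^'k^'k"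
  assumes "pd G" shows "G ** matrix_inv G = mat 1"
proof -
  have "\<forall>x. G *v x = 0 \<longrightarrow> x = 0"
    using assms unfolding pd_def by (metis inner_zero_right less_irrefl)
  then have "invertible G" using matrix_left_invertible_ker invertible_left_inverse by blast
  then show ?thesis unfolding invertible_def matrix_inv_def by (metis (mono_tags, lifting) someI_ex)
qed

section \<open>Trace of a product of psd matrices\<close>

lemma form_sym: "transpose Q = Q \<Longrightarrow> x \<bullet> ((Q::real^'k^'k) *v y) = y \<bullet> (Q *v x)"
  by (metis dot_lmul_matrix inner_commute transpose_matrix_vector)

lemma form_expand:
  fixes Q :: "real^'k^'k"
  assumes "transpose Q = Q"
  shows "(x + t *\<^sub>R e) \<bullet> (Q *v (x + t *\<^sub>R e)) =
     x \<bullet> (Q *v x) + 2 * t * (e \<bullet> (Q *v x)) + t^2 * (e \<bullet> (Q *v e))"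
proof -
  have "x \<bullet> (Q *v e) = e \<bullet> (Q *v x)" using form_sym[OF assms] .
  then show ?thesis
    by (simp add: matrix_vector_right_distrib matrix_vector_mult_scaleR inner_add_left inner_add_right
        power2_eq_square algebra_simps)
qed

lemma psd_cs:
  fixes Q :: "real^'k^'k"
  assumes "psd Q"
  shows "(e \<bullet> (Q *v x))^2 \<le> (e \<bullet> (Q *v e)) * (x \<bullet> (Q *v x))"
proof -
  define b where "b = e \<bullet> (Q *v x)"
  define q where "q = e \<bullet> (Q *v e)"
  define c where "c = x \<bullet> (Q *v x)"
  have H: "0 \<le> c + 2 * t * b + t^2 * q" for t
    using psd_form[OF assms, of "x + t *\<^sub>R e"] form_expand[OF psd_sym[OF assms], of x t e]
    unfolding b_def q_def c_def by simp
  have q0: "0 \<le> q" unfolding q_def using psd_form[OF assms] .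
  show ?thesis
  proof (cases "q = 0")
    case True
    have "b = 0"
    proof (rule ccontr)
      assume "b \<noteq> 0"
      have "0 \<le> c + 2 * (- (c + 1) / (2 * b)) * b" using H[of "- (c + 1) / (2 * b)"] True by simp
      also have "\<dots> = -1" using \<open>b \<noteq> 0\<close> by (simp add: field_simps)
      finally show False by simp
    qed
    then show ?thesis using True unfolding b_def q_def by simp
  next
    case False
    then have qp: "0 < q" using q0 by simp
    have "0 \<le> c + 2 * (- b / q) * b + (- b / q)^2 * q" using H .
    also have "\<dots> = c - b^2 / q" using qp by (simp add: field_simps power2_eq_square)
    finally have "b^2 / q \<le> c" by simp
    then have "b^2 \<le> q * c" using qp by (simp add: field_simps)
    then show ?thesis unfolding b_def q_def c_def .
  qed
qed

lemma axis_form: "axis a 1 \<bullet> ((Q::real^'k^'k) *v x) = (\<Sum>j\<in>UNIV. Q$a$j * x$j)"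
  by (simp add: inner_vec_def axis_def matrix_vector_mult_def if_distrib if_fun_app cong: if_cong)

lemma axis_axis: "axis a 1 \<bullet> ((Q::real^'k^'k) *v axis b 1) = Q$a$b"
  unfolding axis_form by (simp add: axis_def if_distrib cong: if_cong)

lemma trace_outer: "trace ((P::real^'k^'k) ** outer v) = v \<bullet> (P *v v)"
  by (simp add: trace_def matrix_matrix_mult_def outer_def inner_vec_def matrix_vector_mult_def
      sum_distrib_left mult_ac)

definition supp :: "'k set \<Rightarrow> real^'k^'k \<Rightarrow> bool" where
  "supp I Q \<longleftrightarrow> (\<forall>i j. i \<notin> I \<or> j \<notin> I \<longrightarrow> Q$i$j = 0)"

lemma psd_trace_supp:
  fixes P :: "real^'k^'k"
  assumes P: "psd P" and fin: "finite I"
  shows "\<forall>Q. psd Q \<and> supp I Q \<longrightarrow> 0 \<le> trace (P ** Q)"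
  using fin
proof (induction I rule: finite_induct)
  case empty
  show ?case
  proof (intro allI impI)
    fix Q :: "real^'k^'k" assume "psd Q \<and> supp {} Q"
    then have "Q = 0" by (simp add: supp_def vec_eq_iff)
    then show "0 \<le> trace (P ** Q)" by (simp add: mm_zero_r trace_zero)
  qed
next
  case (insert a I)
  show ?case
  proof (intro allI impI)
    fix Q :: "real^'k^'k" assume QH: "psd Q \<and> supp (insert a I) Q"
    then have Qp: "psd Q" and Qs: "supp (insert a I) Q" by auto
    have sym: "Q$i$j = Q$j$i" for i j using psd_sym[OF Qp] by (metis transpose_def vec_lambda_beta)
    define q where "q = Q$a$a"
    define v where "v = (\<chi> i. Q$i$a)"
    define Q' where "Q' = Q - (1/q) *\<^sub>R outer v"
    have q0: "0 \<le> q" unfolding q_def using psd_form[OF Qp, of "axis a 1"] axis_axis by metis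
    have vx: "v \<bullet> x = axis a 1 \<bullet> (Q *v x)" for x
      unfolding axis_form unfolding v_def inner_vec_def by (rule sum.cong) (auto simp: sym[of _ a] mult.commute)
    have cs: "(v \<bullet> x)^2 \<le> q * (x \<bullet> (Q *v x))" for x
      using psd_cs[OF Qp, of "axis a 1" x] unfolding vx q_def axis_axis .
    have q0v: "q = 0 \<Longrightarrow> Q$a$j = 0" for j
      using cs[of "axis j 1"] by (simp add: vx axis_axis)
    have Q'p: "psd Q'"
      unfolding psd_def
    proof (intro conjI allI)
      show "transpose Q' = Q'"
        unfolding Q'_def using psd_sym[OF Qp] psd_sym[OF psd_outer[of v]]
        by (simp add: tr_diff transpose_scalar)
      fix x
      have "x \<bullet> (Q' *v x) = x \<bullet> (Q *v x) - (1/q) * (v \<bullet> x)^2"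
        unfolding Q'_def by (simp add: matrix_vector_mult_diff_rdistrib scale_mv inner_diff_right outer_form)
      moreover have "(1/q) * (v \<bullet> x)^2 \<le> x \<bullet> (Q *v x)"
      proof (cases "q = 0")
        case True then show ?thesis using psd_form[OF Qp] by simp
      next
        case False then have "0 < q" using q0 by simp
        then show ?thesis using cs[of x] by (simp add: field_simps)
      qed
      ultimately show "0 \<le> x \<bullet> (Q' *v x)" by simp
    qed
    have entry: "Q'$i$j = Q$i$j - (1/q) * (Q$i$a * Q$j$a)" for i j
      by (simp add: Q'_def outer_def v_def)
    have Q'a: "Q'$a$j = 0" for j
    proof (cases "q = 0")
      case True then show ?thesis using q0v entry by simp
    next
      case False then show ?thesis by (simp add: entry sym[of j a] q_def)
    qed
    have Q's: "supp I Q'"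
      unfolding supp_def
    proof (intro allI impI)
      fix i j assume ij: "i \<notin> I \<or> j \<notin> I"
      show "Q'$i$j = 0"
      proof (cases "i = a \<or> j = a")
        case True
        then show ?thesis using Q'a sym entry by (metis mult.commute)
      next
        case False
        then have "i \<notin> insert a I \<or> j \<notin> insert a I" using ij by auto
        then show ?thesis using Qs unfolding supp_def entry by auto
      qed
    qed
    have "0 \<le> trace (P ** Q')" using insert.IH Q'p Q's by blast
    moreover have "0 \<le> (1/q) * trace (P ** outer v)"
      using q0 psd_form[OF P, of v] by (simp add: trace_outer)
    moreover have "trace (P ** Q) = trace (P ** Q') + (1/q) * trace (P ** outer v)"
      unfolding Q'_def by (simp add: mm_diff_l mm_scale_l trace_sub trace_scale)
    ultimately show "0 \<le> trace (P ** Q)" by simp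
  qed
qed

lemma psd_trace:
  fixes P Q :: "real^'k^'k"
  assumes "psd P" "psd Q" shows "0 \<le> trace (P ** Q)"
  using psd_trace_supp[OF assms(1), of UNIV] assms(2) by (simp add: supp_def)

section \<open>Completion of squares\<close>

lemma stage_id:
  fixes A X :: "real^'n^'n" and B :: "real^'m^'n" and Q :: "real^'n^'n" and R Gi :: "real^'m^'m"
    and F :: "real^'n^'m"
  assumes GGi: "(R + transpose B ** X ** B) ** Gi = mat 1"
    and Gs: "transpose (R + transpose B ** X ** B) = R + transpose B ** X ** B"
    and Xs: "transpose X = X"
  shows "transpose (IF F) ** bdiag Q R ** IF F + transpose (AB A B ** IF F) ** X ** (AB A B ** IF F)
   = (transpose A ** X ** A - transpose A ** X ** B ** Gi ** transpose B ** X ** A + Q)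
     + transpose (F - (- (Gi ** transpose B ** X ** A))) ** (R + transpose B ** X ** B)
         ** (F - (- (Gi ** transpose B ** X ** A)))"
proof -
  define G where "G = R + transpose B ** X ** B"
  define Fs where "Fs = - (Gi ** transpose B ** X ** A)"
  have h1: "G ** Fs = - (transpose B ** X ** A)"
    unfolding Fs_def using GGi[folded G_def] by (simp add: mm_neg_l matrix_mul_assoc)
  have h2: "transpose Fs ** G = - (transpose A ** X ** B)"
  proof -
    have "transpose (G ** Fs) = transpose Fs ** G" using Gs[folded G_def] by (simp add: matrix_transpose_mul)
    then show ?thesis using h1 Xs by (simp add: tr_neg matrix_transpose_mul matrix_mul_assoc)
  qed
  have h3: "transpose Fs ** G ** Fs = transpose A ** X ** B ** Gi ** transpose B ** X ** A"
  proof -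
    have "transpose Fs ** G ** Fs = - (transpose A ** X ** B) ** Fs" using h2 by simp
    also have "\<dots> = transpose A ** X ** B ** Gi ** transpose B ** X ** A"
      unfolding Fs_def by (simp add: mm_neg_l mm_neg_r matrix_mul_assoc)
    finally show ?thesis .
  qed
  have e1: "transpose (AB A B ** IF F) ** X ** (AB A B ** IF F) =
     transpose A ** X ** A + transpose A ** X ** B ** F + transpose F ** transpose B ** X ** A
     + transpose F ** transpose B ** X ** B ** F"
    unfolding AB_IF by (simp add: mm_simps matrix_mul_assoc algebra_simps)
  have e2: "transpose (F - Fs) ** G ** (F - Fs) =
     transpose F ** G ** F - transpose F ** (G ** Fs) - (transpose Fs ** G) ** F + transpose Fs ** G ** Fs"
    by (simp add: mm_simps matrix_mul_assoc algebra_simps)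
  have e3: "transpose F ** G ** F = transpose F ** R ** F + transpose F ** transpose B ** X ** B ** F"
    unfolding G_def by (simp add: mm_simps matrix_mul_assoc)
  show ?thesis
    unfolding G_def[symmetric] Fs_def[symmetric] IF_bdiag_IF e1 e2 e3 h1 h2 h3
    by (simp add: mm_simps matrix_mul_assoc algebra_simps Fs_def)
qed

lemma trace_stage:
  fixes bd :: "real^('n::finite + 'm::finite)^('n + 'm)" and I :: "real^'n^('n + 'm)" and Sg X W :: "real^'n^'n"
    and M :: "real^('n + 'm)^'n"
  shows "trace (bd ** (I ** Sg ** transpose I)) + trace (X ** (M ** (I ** Sg ** transpose I) ** transpose M + W))
    = trace ((transpose I ** bd ** I + transpose (M ** I) ** X ** (M ** I)) ** Sg) + trace (X ** W)"
proof -
  have a: "trace (bd ** (I ** Sg ** transpose I)) = trace ((transpose I ** bd ** I) ** Sg)"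
  proof -
    have "trace (bd ** (I ** Sg ** transpose I)) = trace ((bd ** I ** Sg) ** transpose I)"
      by (simp add: matrix_mul_assoc)
    also have "\<dots> = trace (transpose I ** (bd ** I ** Sg))" by (rule trace_mul_sym)
    finally show ?thesis by (simp add: matrix_mul_assoc)
  qed
  have b: "trace (X ** (M ** (I ** Sg ** transpose I) ** transpose M)) = trace ((transpose (M ** I) ** X ** (M ** I)) ** Sg)"
  proof -
    have "trace (X ** (M ** (I ** Sg ** transpose I) ** transpose M)) = trace ((X ** (M ** I) ** Sg) ** transpose (M ** I))"
      by (simp add: matrix_mul_assoc matrix_transpose_mul)
    also have "\<dots> = trace (transpose (M ** I) ** (X ** (M ** I) ** Sg))" by (rule trace_mul_sym)
    finally show ?thesis by (simp add: matrix_mul_assoc)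
  qed
  show ?thesis using a b by (simp add: mm_add_l mm_add_r trace_add)
qed

lemma bdiag_lin: "bdiag (Q1 + c *\<^sub>R Q2) (R1 + c *\<^sub>R R2) = bdiag Q1 R1 + c *\<^sub>R bdiag Q2 R2"
  by (simp add: bdiag_def vec_eq_iff split: sum.split)

lemma cost_lin:
  "cost A B W N Qf Q R S + c * cost A B W N Qft Qt Rt S =
   cost A B W N (Qf + c *\<^sub>R Qft) (\<lambda>k. Q k + c *\<^sub>R Qt k) (\<lambda>k. R k + c *\<^sub>R Rt k) S"
  unfolding cost_def bdiag_lin
  by (simp add: mm_add_r mm_scale_r trace_add trace_scale sum.distrib sum_distrib_left algebra_simps)

context
  fixes A :: "real^'n^'n" and B :: "real^'m^'n"
    and V W :: "real^'n^'n" and z :: "real^'n"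
    and N :: nat
    and Qf Qft :: "real^'n^'n" and Q Qt :: "nat \<Rightarrow> real^'n^'n"
    and R Rt :: "nat \<Rightarrow> real^'m^'m" and lam :: real
  assumes W: "psd W"
    and Qf: "psd Qf" and Qft: "psd Qft"
    and Qk: "\<forall>k. psd (Q k)" and Qtk: "\<forall>k. psd (Qt k)"
    and Rk: "\<forall>k. \<forall>mu>0. pd (R k + mu *\<^sub>R Rt k)"
    and lam: "lam > 0"
begin

lemma Gpd: "psd X \<Longrightarrow> pd (R k + lam *\<^sub>R Rt k + transpose B ** X ** B)"
  using Rk lam pd_add_psd psd_congr by blast

lemma Qlam: "psd (Q k + lam *\<^sub>R Qt k)"
  using Qk Qtk lam by (simp add: psd_add psd_scale)

lemma Xr_psd: "psd (Xr A B N Qf Q R Qft Qt Rt lam j)"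
proof (induction j)
  case 0
  then show ?case using Qf Qft lam by (simp add: psd_add psd_scale)
next
  case (Suc j)
  define X where "X = Xr A B N Qf Q R Qft Qt Rt lam j"
  define k where "k = N - Suc j"
  define G where "G = R k + lam *\<^sub>R Rt k + transpose B ** X ** B"
  define Gi where "Gi = matrix_inv G"
  have Xp: "psd X" using Suc X_def by simp
  have Gp: "pd G" unfolding G_def using Gpd[OF Xp] .
  have GGi: "G ** Gi = mat 1" unfolding Gi_def using pd_inv[OF Gp] .
  have Gs: "transpose G = G" using Gp pd_def by blast
  have id: "transpose (IF (- (Gi ** transpose B ** X ** A))) ** bdiag (Q k + lam *\<^sub>R Qt k) (R k + lam *\<^sub>R Rt k) ** IF (- (Gi ** transpose B ** X ** A))
     + transpose (AB A B ** IF (- (Gi ** transpose B ** X ** A))) ** X ** (AB A B ** IF (- (Gi ** transpose B ** X ** A)))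
     = Xr A B N Qf Q R Qft Qt Rt lam (Suc j)"
  proof -
    have E: "transpose (IF (- (Gi ** transpose B ** X ** A))) ** bdiag (Q k + lam *\<^sub>R Qt k) (R k + lam *\<^sub>R Rt k) ** IF (- (Gi ** transpose B ** X ** A))
     + transpose (AB A B ** IF (- (Gi ** transpose B ** X ** A))) ** X ** (AB A B ** IF (- (Gi ** transpose B ** X ** A)))
     = (transpose A ** X ** A - transpose A ** X ** B ** Gi ** transpose B ** X ** A + (Q k + lam *\<^sub>R Qt k))
     + transpose (- (Gi ** transpose B ** X ** A) - (- (Gi ** transpose B ** X ** A))) ** G ** (- (Gi ** transpose B ** X ** A) - (- (Gi ** transpose B ** X ** A)))"
      using stage_id[where R="R k + lam *\<^sub>R Rt k" and B=B and X=X and Gi=Gi and Q="Q k + lam *\<^sub>R Qt k" and F="- (Gi ** transpose B ** X ** A)" and A=A]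
        GGi Gs psd_sym[OF Xp] unfolding G_def by blast
    have "Xr A B N Qf Q R Qft Qt Rt lam (Suc j) = transpose A ** X ** A - transpose A ** X ** B ** Gi ** transpose B ** X ** A + (Q k + lam *\<^sub>R Qt k)"
      unfolding Xr.simps Let_def X_def[symmetric] k_def[symmetric] G_def[symmetric] Gi_def[symmetric]
      by (simp add: add.assoc)
    with E show ?thesis by (simp add: mm_zero_r mm_zero_l tr_zero)
  qed
  have "psd (bdiag (Q k + lam *\<^sub>R Qt k) (R k + lam *\<^sub>R Rt k))"
    using Qlam Rk lam pd_psd psd_bdiag by blast
  then show ?case unfolding id[symmetric]
    by (intro psd_add psd_congr Xp)
qed


lemma Xl_N: "Xl A B N Qf Q R Qft Qt Rt lam N = Qf + lam *\<^sub>R Qft"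
  by (simp add: Xl_def)

lemma Xl_psd: "psd (Xl A B N Qf Q R Qft Qt Rt lam k)"
  unfolding Xl_def by (rule Xr_psd)

lemma Xl_step:
  assumes "k < N"
  shows "Xl A B N Qf Q R Qft Qt Rt lam k =
    (let X = Xl A B N Qf Q R Qft Qt Rt lam (Suc k) in
     transpose A ** X ** A
      - transpose A ** X ** B ** matrix_inv (R k + lam *\<^sub>R Rt k + transpose B ** X ** B)
          ** transpose B ** X ** A
      + (Q k + lam *\<^sub>R Qt k))"
proof -
  have e: "N - k = Suc (N - Suc k)" using assms by simp
  have e2: "N - Suc (N - Suc k) = k" using assms by simp
  show ?thesis unfolding Xl_def e Xr.simps Let_def e2 by (simp add: add.assoc)
qed

lemma stage_k:
  assumes "k < N"
  shows "trace (bdiag (Q k + lam *\<^sub>R Qt k) (R k + lam *\<^sub>R Rt k) ** (IF F ** Sg ** transpose (IF F)))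
     + trace (Xl A B N Qf Q R Qft Qt Rt lam (Suc k) ** (AB A B ** (IF F ** Sg ** transpose (IF F)) ** transpose (AB A B) + W))
   = trace (Xl A B N Qf Q R Qft Qt Rt lam k ** Sg) + trace (Xl A B N Qf Q R Qft Qt Rt lam (Suc k) ** W)
     + trace (transpose (F - Fl A B N Qf Q R Qft Qt Rt lam k)
          ** (R k + lam *\<^sub>R Rt k + transpose B ** Xl A B N Qf Q R Qft Qt Rt lam (Suc k) ** B)
          ** (F - Fl A B N Qf Q R Qft Qt Rt lam k) ** Sg)"
proof -
  define X where "X = Xl A B N Qf Q R Qft Qt Rt lam (Suc k)"
  define G where "G = R k + lam *\<^sub>R Rt k + transpose B ** X ** B"
  define Gi where "Gi = matrix_inv G"
  have Xp: "psd X" unfolding X_def by (rule Xl_psd)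
  have Gp: "pd G" unfolding G_def using Gpd[OF Xp] .
  have GGi: "G ** Gi = mat 1" unfolding Gi_def using pd_inv[OF Gp] .
  have Gs: "transpose G = G" using Gp pd_def by blast
  have Fl: "Fl A B N Qf Q R Qft Qt Rt lam k = - (Gi ** transpose B ** X ** A)"
    unfolding Fl_def Let_def X_def[symmetric] G_def[symmetric] Gi_def[symmetric] ..
  have Xk: "Xl A B N Qf Q R Qft Qt Rt lam k = transpose A ** X ** A - transpose A ** X ** B ** Gi ** transpose B ** X ** A + (Q k + lam *\<^sub>R Qt k)"
    unfolding Xl_step[OF assms] Let_def X_def[symmetric] G_def[symmetric] Gi_def[symmetric] ..
  have E: "transpose (IF F) ** bdiag (Q k + lam *\<^sub>R Qt k) (R k + lam *\<^sub>R Rt k) ** IF F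
     + transpose (AB A B ** IF F) ** X ** (AB A B ** IF F)
     = Xl A B N Qf Q R Qft Qt Rt lam k
     + transpose (F - Fl A B N Qf Q R Qft Qt Rt lam k) ** G ** (F - Fl A B N Qf Q R Qft Qt Rt lam k)"
    unfolding Xk Fl
    using stage_id[where R="R k + lam *\<^sub>R Rt k" and B=B and X=X and Gi=Gi and Q="Q k + lam *\<^sub>R Qt k" and F=F and A=A]
        GGi Gs psd_sym[OF Xp] unfolding G_def by blast
  show ?thesis
    unfolding X_def[symmetric] G_def[symmetric] trace_stage E
    by (simp add: mm_add_r trace_add)
qed

lemma decomp:
  fixes S :: "nat \<Rightarrow> real^('n + 'm)^('n + 'm)" and F :: "nat \<Rightarrow> real^'n^'m"
  assumes N: "N \<ge> 1"
    and S0: "S 0 = IF (F 0) ** Sg0 ** transpose (IF (F 0))"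
    and Sk: "\<forall>k\<in>{1..N-1}. S k = Phi A B W (F k) (S (k - 1))"
  defines "Sig \<equiv> \<lambda>k. if k = 0 then Sg0 else AB A B ** S (k - 1) ** transpose (AB A B) + W"
  shows "cost A B W N (Qf + lam *\<^sub>R Qft) (\<lambda>k. Q k + lam *\<^sub>R Qt k) (\<lambda>k. R k + lam *\<^sub>R Rt k) S
     = trace (Xl A B N Qf Q R Qft Qt Rt lam 0 ** Sg0) + (\<Sum>k<N. trace (Xl A B N Qf Q R Qft Qt Rt lam (Suc k) ** W))
       + (\<Sum>k<N. trace (transpose (F k - Fl A B N Qf Q R Qft Qt Rt lam k)
          ** (R k + lam *\<^sub>R Rt k + transpose B ** Xl A B N Qf Q R Qft Qt Rt lam (Suc k) ** B)
          ** (F k - Fl A B N Qf Q R Qft Qt Rt lam k) ** Sig k))"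
proof -
  let ?X = "Xl A B N Qf Q R Qft Qt Rt lam"
  let ?e = "\<lambda>k. trace (transpose (F k - Fl A B N Qf Q R Qft Qt Rt lam k)
          ** (R k + lam *\<^sub>R Rt k + transpose B ** ?X (Suc k) ** B)
          ** (F k - Fl A B N Qf Q R Qft Qt Rt lam k) ** Sig k)"
  have SigS: "Sig (Suc k) = AB A B ** S k ** transpose (AB A B) + W" for k
    unfolding Sig_def by simp
  have Sform: "S k = IF (F k) ** Sig k ** transpose (IF (F k))" if "k < N" for k
  proof (cases k)
    case 0 then show ?thesis using S0 unfolding Sig_def by simp
  next
    case (Suc j)
    then have "k \<in> {1..N-1}" using that by simp
    then show ?thesis using Sk Suc unfolding Sig_def Phi_def by simp
  qed
  have st: "trace (bdiag (Q k + lam *\<^sub>R Qt k) (R k + lam *\<^sub>R Rt k) ** S k)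
      = (trace (?X k ** Sig k) - trace (?X (Suc k) ** Sig (Suc k))) + (trace (?X (Suc k) ** W) + ?e k)"
    if "k < N" for k
    using stage_k[OF that, of "F k" "Sig k"] unfolding SigS Sform[OF that, symmetric] by simp
  have "(\<Sum>k<N. trace (bdiag (Q k + lam *\<^sub>R Qt k) (R k + lam *\<^sub>R Rt k) ** S k))
     = (\<Sum>k<N. trace (?X k ** Sig k) - trace (?X (Suc k) ** Sig (Suc k))) + (\<Sum>k<N. trace (?X (Suc k) ** W) + ?e k)"
    using st by (simp add: sum.distrib)
  also have "(\<Sum>k<N. trace (?X k ** Sig k) - trace (?X (Suc k) ** Sig (Suc k))) = trace (?X 0 ** Sig 0) - trace (?X N ** Sig N)"
    by (rule sum_lessThan_telescope')
  finally have sums: "(\<Sum>k<N. trace (bdiag (Q k + lam *\<^sub>R Qt k) (R k + lam *\<^sub>R Rt k) ** S k))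
     = trace (?X 0 ** Sig 0) - trace (?X N ** Sig N) + (\<Sum>k<N. trace (?X (Suc k) ** W)) + (\<Sum>k<N. ?e k)"
    by (simp add: sum.distrib)
  have SN: "Sig N = AB A B ** S (N - 1) ** transpose (AB A B) + W"
    using N SigS[of "N - 1"] by simp
  show ?thesis
    unfolding cost_def sums using SN Xl_N by (simp add: Sig_def)
qed

lemma Sig_psd:
  fixes S :: "nat \<Rightarrow> real^('n + 'm)^('n + 'm)" and F :: "nat \<Rightarrow> real^'n^'m"
  assumes Sg0: "psd Sg0"
    and S0: "S 0 = IF (F 0) ** Sg0 ** transpose (IF (F 0))"
    and Sk: "\<forall>k\<in>{1..N-1}. S k = Phi A B W (F k) (S (k - 1))"
  shows "k < N \<Longrightarrow> psd (if k = 0 then Sg0 else AB A B ** S (k - 1) ** transpose (AB A B) + W)"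
proof (induction k)
  case 0 then show ?case using Sg0 by simp
next
  case (Suc j)
  have "psd (S j)"
  proof (cases j)
    case 0 then show ?thesis using S0 Sg0 psd_congr' by simp
  next
    case (Suc i)
    then have "j \<in> {1..N-1}" using Suc.prems by simp
    then have "S j = IF (F j) ** (AB A B ** S i ** transpose (AB A B) + W) ** transpose (IF (F j))"
      using Sk Suc unfolding Phi_def by simp
    then show ?thesis using Suc.IH Suc.prems \<open>j = Suc i\<close> psd_congr' by simp
  qed
  then show ?case using W by (simp add: psd_add psd_congr')
qed

end


theorem proposition7:
  fixes A :: "real^'n^'n" and B :: "real^'m^'n"
    and V W :: "real^'n^'n" and z :: "real^'n"
    and N :: nat and \<gamma> :: real
    and Qf Qft :: "real^'n^'n" and Q Qt :: "nat \<Rightarrow> real^'n^'n"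
    and R Rt :: "nat \<Rightarrow> real^'m^'m" and lam :: real
  assumes N: "N \<ge> 1"
    and V: "psd V" and W: "psd W"
    and Qf: "psd Qf" and Qft: "psd Qft"
    and Qk: "\<forall>k. psd (Q k)" and Qtk: "\<forall>k. psd (Qt k)"
    and Rk: "\<forall>k. \<forall>mu>0. pd (R k + mu *\<^sub>R Rt k)"
    and strict: "strictly_feasible A B W V z N Qft Qt Rt \<gamma>"
    and C0: "cost A B W N Qft Qt Rt (Sl A B W V z N Qf Q R Qft Qt Rt 0) > \<gamma>"
    and bij: "inj_on (fl A B W V z N Qf Q R Qft Qt Rt \<gamma>) {0..}"
    and lam: "lam > 0"
    and act: "cost A B W N Qft Qt Rt (Sl A B W V z N Qf Q R Qft Qt Rt lam) = \<gamma>"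
  shows "optimal A B W V z N Qf Q R Qft Qt Rt \<gamma>
           (Sl A B W V z N Qf Q R Qft Qt Rt lam) (Fl A B N Qf Q R Qft Qt Rt lam)"
proof -
  let ?SL = "Sl A B W V z N Qf Q R Qft Qt Rt lam"
  let ?FL = "Fl A B N Qf Q R Qft Qt Rt lam"
  let ?X = "Xl A B N Qf Q R Qft Qt Rt lam"
  let ?costl = "cost A B W N (Qf + lam *\<^sub>R Qft) (\<lambda>k. Q k + lam *\<^sub>R Qt k) (\<lambda>k. R k + lam *\<^sub>R Rt k)"
  define base where "base = trace (?X 0 ** (V + outer z)) + (\<Sum>k<N. trace (?X (Suc k) ** W))"
  have S0L: "?SL 0 = IF (?FL 0) ** (V + outer z) ** transpose (IF (?FL 0))" by simp
  have SkL: "\<forall>k\<in>{1..N-1}. ?SL k = Phi A B W (?FL k) (?SL (k - 1))"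
  proof
    fix k assume "k \<in> {1..N-1}"
    then have "k = Suc (k - 1)" by simp
    then show "?SL k = Phi A B W (?FL k) (?SL (k - 1))" by (metis Sl.simps(2))
  qed
  have feasL: "feasible A B W V z N Qft Qt Rt \<gamma> ?SL ?FL"
    unfolding feasible_def using S0L SkL act by simp
  have eqL: "?costl ?SL = base"
    using decomp[OF W Qf Qft Qk Qtk Rk lam N S0L SkL] unfolding base_def
    by (simp add: mm_zero_r mm_zero_l tr_zero trace_zero)
  have geS: "base \<le> ?costl S'" if fs: "feasible A B W V z N Qft Qt Rt \<gamma> S' F'" for S' F'
  proof -
    have S0: "S' 0 = IF (F' 0) ** (V + outer z) ** transpose (IF (F' 0))"
      and Sk: "\<forall>k\<in>{1..N-1}. S' k = Phi A B W (F' k) (S' (k - 1))"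
      using fs unfolding feasible_def by auto
    have Sg0: "psd (V + outer z)" using V psd_outer psd_add by blast
    have nn: "0 \<le> trace (transpose (F' k - ?FL k)
          ** (R k + lam *\<^sub>R Rt k + transpose B ** ?X (Suc k) ** B)
          ** (F' k - ?FL k) ** (if k = 0 then V + outer z else AB A B ** S' (k - 1) ** transpose (AB A B) + W))"
      if "k < N" for k
    proof (rule psd_trace)
      show "psd (transpose (F' k - ?FL k) ** (R k + lam *\<^sub>R Rt k + transpose B ** ?X (Suc k) ** B) ** (F' k - ?FL k))"
        using psd_congr pd_psd Gpd[OF W Qf Qft Qk Qtk Rk lam Xl_psd[OF W Qf Qft Qk Qtk Rk lam]] by blast
      show "psd (if k = 0 then V + outer z else AB A B ** S' (k - 1) ** transpose (AB A B) + W)"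
        using Sig_psd[OF W Qf Qft Qk Qtk Rk lam Sg0 S0 Sk that] .
    qed
    show ?thesis
      using decomp[OF W Qf Qft Qk Qtk Rk lam N S0 Sk] unfolding base_def[symmetric]
      using sum_nonneg[of "{..<N}", OF nn] by simp
  qed
  show ?thesis
    unfolding optimal_def
  proof (intro conjI allI impI feasL)
    fix S' F' assume fs: "feasible A B W V z N Qft Qt Rt \<gamma> S' F'"
    have c: "cost A B W N Qft Qt Rt S' \<le> \<gamma>" using fs unfolding feasible_def by simp
    have "cost A B W N Qf Q R ?SL + lam * \<gamma> = base"
      using eqL cost_lin[of A B W N Qf Q R ?SL lam Qft Qt Rt] act by simp
    also have "\<dots> \<le> cost A B W N Qf Q R S' + lam * cost A B W N Qft Qt Rt S'"
      using geS[OF fs] cost_lin[of A B W N Qf Q R S' lam Qft Qt Rt] by simp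
    also have "\<dots> \<le> cost A B W N Qf Q R S' + lam * \<gamma>"
      using c lam by simp
    finally show "cost A B W N Qf Q R ?SL \<le> cost A B W N Qf Q R S'" by simp
  qed
qed

end
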